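(* Consider Method 2.1 (described in the context) for minimizing the discrete maximum function $f$ on $D$. Suppose the method does not terminate and the numbers $\varepsilon_k$ are chosen with $\varepsilon_k>0$ for all $k\in K$ and $\varepsilon_k\to0$. Then the sequences $\{x_k\},\{\sigma_k\}$ are defined for all $k\in K$ and $\lim_{k\to\infty}f(x_k)=f^*$, $\lim_{k\to\infty}\sigma_k=f^*$.
   Context: Setting: $D\subset\mathbb{R}^n$ closed convex; $f_j$, $j\in J=\{1,\dots,m\}$, convex on $\mathbb{R}^n$; $f(x)=\max_{j\in J}f_j(x)$; $f^*=\min_Df$ is attained; $X^*=\{x\in D:f(x)=f^*\}$; $K=\{0,1,\dots\}$; $\partial f_j(x)$ is the subdifferential. Method 2.1: fix $x^*\in X^*$; choose a closed convex bounded $G_0\subseteq D$ with $x^*\in G_0$, a closed convex $M_0\subset\mathbb{R}^{n+1}$ with $(x^*,f^* )\in M_0$, numbers $\varepsilon_0\ge0$ and $\bar\gamma_0\le f^*$; $i=k=0$. Step 1: let $(y_i,\gamma_i)$ be a solution of $\min\{\gamma:(x,\gamma)\in M_i,\ x\in G_i,\ \gamma\ge\bar\gamma_i\}$; if $f(y_i)=\gamma_i$ stop. Step 2: if $f(y_i)-\gamma_i>\varepsilon_k$, choose closed convex $S_i\subseteq\mathbb{R}^{n+1}$ with $(x^*,f^* )\in S_i$ and set $Q_i=M_i\cap S_i$; otherwise set $i_k=i$, $x_k=y_{i_k}$, $\sigma_k=\gamma_{i_k}$, choose closed convex $Q_i\ni(x^*,f^* )$, choose $\varepsilon_{k+1}\ge0$,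 $k\leftarrow k+1$. Step 3: let $J(y_i)=\{j:f_j(y_i)=f(y_i)\}$ and choose $J_i\subset J$ containing at least one index of $J(y_i)$. Step 4: for $j\in J_i$ choose a nonempty finite $A_i^j\subset\partial f_j(y_i)$; $M_{i+1}=Q_i\cap\{(x,\gamma):f_j(y_i)+\langle a,x-y_i\rangle\le\gamma\ \forall j\in J_i,\ a\in A_i^j\}$. Step 5: choose closed convex $G_{i+1}\subseteq G_0$ with $x^*\in G_{i+1}$ and a number $\bar\gamma_{i+1}$ with $\bar\gamma_0\le\bar\gamma_{i+1}\le f^*$; $i\leftarrow i+1$; go to Step 1. *)

theory Defs
  imports "HOL-Analysis.Analysis"
begin

definition maxf :: "(nat \<Rightarrow> 'a \<Rightarrow> real) \<Rightarrow> nat \<Rightarrow> 'a \<Rightarrow> real" where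
  "maxf fs m x = Max ((\<lambda>j. fs j x) ` {1..m})"

definition subdiff :: "('a::real_inner \<Rightarrow> real) \<Rightarrow> 'a \<Rightarrow> 'a set" where
  "subdiff g x = {a. \<forall>z. g x + inner a (z - x) \<le> g z}"

definition active :: "(nat \<Rightarrow> 'a \<Rightarrow> real) \<Rightarrow> nat \<Rightarrow> 'a \<Rightarrow> nat set" where
  "active fs m y = {j \<in> {1..m}. fs j y = maxf fs m y}"

text \<open>The outer counter k of Method 2.1 at the beginning of inner iteration i:
  it is incremented exactly at those i where f(y_i) - gamma_i <= eps_k.\<close>
fun kctr :: "('a \<Rightarrow> real) \<Rightarrow> (nat \<Rightarrow> 'a) \<Rightarrow> (nat \<Rightarrow> real) \<Rightarrow> (nat \<Rightarrow> real) \<Rightarrow> nat \<Rightarrow> nat" where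
  "kctr f y g e 0 = 0"
| "kctr f y g e (Suc i) =
     (if f (y i) - g i > e (kctr f y g e i) then kctr f y g e i else Suc (kctr f y g e i))"

text \<open>The index i_k: the inner iteration at which the "otherwise" branch of
  Step 2 is taken while the outer counter equals k.\<close>
definition outer_idx :: "('a \<Rightarrow> real) \<Rightarrow> (nat \<Rightarrow> 'a) \<Rightarrow> (nat \<Rightarrow> real) \<Rightarrow> (nat \<Rightarrow> real) \<Rightarrow> nat \<Rightarrow> nat" where
  "outer_idx f y g e k = (LEAST i. kctr f y g e i = k \<and> \<not> (f (y i) - g i > e k))"

end

theory Submission
  imports Defs
begin


lemma sep_contra:
  fixes z :: "nat \<Rightarrow> 'a::heine_borel" and F :: "'a \<Rightarrow> real"
  assumes bz: "bounded (range z)" and cF: "continuous_on UNIV F"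
    and B: "B \<ge> 0" and e: "e > 0"
    and H: "\<And>i l. i < l \<Longrightarrow> e < F (z l) - F (z i) + B * dist (z l) (z i)"
  shows False
proof -
  obtain p r where r: "strict_mono (r::nat\<Rightarrow>nat)" and lim: "(z \<circ> r) \<longlonglongrightarrow> p"
    using bounded_imp_convergent_subsequence[OF bz] by blast
  have limF: "(\<lambda>n. F ((z \<circ> r) n)) \<longlonglongrightarrow> F p"
    using cF lim by (metis continuous_on_tendsto_compose iso_tuple_UNIV_I eventually_sequentiallyI)
  define d where "d = e / (2*B+2)"
  have d: "d > 0" using B e by (simp add: d_def)
  have "\<forall>\<^sub>F n in sequentially. dist ((z \<circ> r) n) p < d"
    using lim d tendsto_iff by blast
  moreover have "\<forall>\<^sub>F n in sequentially. dist (F ((z \<circ> r) n)) (F p) < d"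
    using tendstoD[OF limF d] by simp
  ultimately have "\<forall>\<^sub>F n in sequentially. dist ((z \<circ> r) n) p < d \<and> dist (F ((z \<circ> r) n)) (F p) < d"
    by (rule eventually_conj)
  then obtain N where N: "\<And>n. n \<ge> N \<Longrightarrow> dist (z (r n)) p < d \<and> dist (F (z (r n))) (F p) < d"
    by (auto simp: eventually_sequentially)
  have 1: "dist (z (r (Suc N))) (z (r N)) \<le> 2*d"
    using N[of N] N[of "Suc N"] dist_triangle3[of "z (r (Suc N))" "z (r N)" p]
      dist_commute[of p "z (r N)"] dist_commute[of p "z (r (Suc N))"] by linarith
  have 2: "F (z (r (Suc N))) - F (z (r N)) \<le> 2*d"
    using N[of N] N[of "Suc N"] by (simp add: dist_real_def abs_less_iff)
  have "e < F (z (r (Suc N))) - F (z (r N)) + B * dist (z (r (Suc N))) (z (r N))"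
    using H r by (simp add: strict_mono_def)
  also have "\<dots> \<le> 2*d + B*(2*d)" using 1 2 B by (meson add_mono mult_left_mono)
  also have "\<dots> = d * (2*B+2)" by (simp add: algebra_simps)
  also have "\<dots> = e" using B by (simp add: d_def)
  finally show False by simp
qed

lemma max_cont:
  fixes fs :: "nat \<Rightarrow> 'a::topological_space \<Rightarrow> real"
  assumes "finite I" "I \<noteq> {}" "\<And>j. j \<in> I \<Longrightarrow> continuous_on UNIV (fs j)"
  shows "continuous_on UNIV (\<lambda>x. Max ((\<lambda>j. fs j x) ` I))"
  using assms
proof (induction I rule: finite_ne_induct)
  case (singleton x)
  then show ?case by simp
next
  case (insert x F)
  have "(\<lambda>y. Max ((\<lambda>j. fs j y) ` insert x F)) = (\<lambda>y. max (fs x y) (Max ((\<lambda>j. fs j y) ` F)))"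
    using insert by (auto simp: Max_insert)
  then show ?case using insert by (auto intro!: continuous_on_max)
qed

lemma subgrad_bound:
  fixes fs :: "nat \<Rightarrow> real^'n \<Rightarrow> real"
  assumes G: "bounded G" and cv: "\<And>j. j \<in> {1..m} \<Longrightarrow> convex_on UNIV (fs j)"
  shows "\<exists>B\<ge>0. \<forall>j\<in>{1..m}. \<forall>x\<in>G. \<forall>a\<in>subdiff (fs j) x. norm a \<le> B"
proof -
  obtain R where R: "\<And>x. x \<in> G \<Longrightarrow> norm x \<le> R" using G bounded_iff by blast
  define K where "K = cball (0::real^'n) (R+1)"
  have cont: "\<And>j. j \<in> {1..m} \<Longrightarrow> continuous_on UNIV (fs j)"
    using cv convex_on_continuous open_UNIV by blast
  have "bounded (\<Union>j\<in>{1..m}. fs j ` K)"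
    by (rule bounded_UN) (auto simp: K_def intro!: compact_imp_bounded compact_continuous_image
        continuous_on_subset[OF cont])
  then obtain C where C: "\<And>j x. j \<in> {1..m} \<Longrightarrow> x \<in> K \<Longrightarrow> \<bar>fs j x\<bar> \<le> C"
    unfolding bounded_iff by fastforce
  have "\<forall>j\<in>{1..m}. \<forall>x\<in>G. \<forall>a\<in>subdiff (fs j) x. norm a \<le> 2 * max C 0"
  proof (intro ballI)
    fix j x a assume j: "j \<in> {1..m}" and x: "x \<in> G" and a: "a \<in> subdiff (fs j) x"
    show "norm a \<le> 2 * max C 0"
    proof (cases "a = 0")
      case True then show ?thesis by simp
    next
      case False
      define z where "z = x + a /\<^sub>R norm a"
      have "norm z \<le> norm x + norm (a /\<^sub>R norm a)" unfolding z_def by (rule norm_triangle_ineq)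
      also have "\<dots> \<le> R + 1" using R[OF x] False by simp
      finally have zK: "z \<in> K" by (simp add: K_def)
      have xK: "x \<in> K" using R[OF x] by (simp add: K_def)
      have "fs j x + inner a (z - x) \<le> fs j z" using a by (simp add: subdiff_def)
      moreover have "inner a (z - x) = norm a"
        using False by (simp add: z_def inner_commute power2_norm_eq_inner[symmetric] power2_eq_square)
      ultimately have "norm a \<le> fs j z - fs j x" by simp
      also have "\<dots> \<le> 2 * max C 0" using C[OF j zK] C[OF j xK] by linarith
      finally show ?thesis .
    qed
  qed
  then show ?thesis by (intro exI[of _ "2 * max C 0"]) auto
qed

lemma maxf_ge: "j \<in> {1..m} \<Longrightarrow> fs j x \<le> maxf fs m x"
  unfolding maxf_def by (rule Max_ge) auto

theorem theorem2p1p3: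
  fixes D :: "(real^'n) set"
    and fs :: "nat \<Rightarrow> real^'n \<Rightarrow> real" and m :: nat
    and xstar :: "real^'n" and fstar :: real
    and y :: "nat \<Rightarrow> real^'n" and \<gamma> :: "nat \<Rightarrow> real"
    and G :: "nat \<Rightarrow> (real^'n) set"
    and M Q S :: "nat \<Rightarrow> ((real^'n) \<times> real) set"
    and gbar :: "nat \<Rightarrow> real" and eps :: "nat \<Rightarrow> real"
    and Js :: "nat \<Rightarrow> nat set" and A :: "nat \<Rightarrow> nat \<Rightarrow> (real^'n) set"
  assumes D: "closed D" "convex D"
    and m: "m \<ge> 1"
    and fconv: "\<And>j. j \<in> {1..m} \<Longrightarrow> convex_on UNIV (fs j)"
    and xstar: "xstar \<in> D" "\<And>x. x \<in> D \<Longrightarrow> maxf fs m xstar \<le> maxf fs m x"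
    and fstar: "fstar = maxf fs m xstar"
    \<comment> \<open>initialization\<close>
    and G0: "closed (G 0)" "convex (G 0)" "bounded (G 0)" "G 0 \<subseteq> D" "xstar \<in> G 0"
    and M0: "closed (M 0)" "convex (M 0)" "(xstar, fstar) \<in> M 0"
    and gbar0: "gbar 0 \<le> fstar"
    \<comment> \<open>Step 1: (y_i, gamma_i) solves the auxiliary problem\<close>
    and step1: "\<And>i. (y i, \<gamma> i) \<in> M i \<and> y i \<in> G i \<and> \<gamma> i \<ge> gbar i"
    and step1min: "\<And>i x g. (x, g) \<in> M i \<Longrightarrow> x \<in> G i \<Longrightarrow> g \<ge> gbar i \<Longrightarrow> \<gamma> i \<le> g"
    \<comment> \<open>the method does not terminate\<close>
    and noterm: "\<And>i. maxf fs m (y i) \<noteq> \<gamma> i"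
    \<comment> \<open>Step 2\<close>
    and step2a: "\<And>i. maxf fs m (y i) - \<gamma> i > eps (kctr (maxf fs m) y \<gamma> eps i) \<Longrightarrow>
        closed (S i) \<and> convex (S i) \<and> (xstar, fstar) \<in> S i \<and> Q i = M i \<inter> S i"
    and step2b: "\<And>i. \<not> (maxf fs m (y i) - \<gamma> i > eps (kctr (maxf fs m) y \<gamma> eps i)) \<Longrightarrow>
        closed (Q i) \<and> convex (Q i) \<and> (xstar, fstar) \<in> Q i"
    \<comment> \<open>Step 3\<close>
    and step3: "\<And>i. Js i \<subseteq> {1..m} \<and> Js i \<inter> active fs m (y i) \<noteq> {}"
    \<comment> \<open>Step 4\<close>
    and step4A: "\<And>i j. j \<in> Js i \<Longrightarrow>
        finite (A i j) \<and> A i j \<noteq> {} \<and> A i j \<subseteq> subdiff (fs j) (y i)"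
    and step4M: "\<And>i. M (Suc i) = Q i \<inter>
        {(x, g). \<forall>j\<in>Js i. \<forall>a\<in>A i j. fs j (y i) + inner a (x - y i) \<le> g}"
    \<comment> \<open>Step 5\<close>
    and step5G: "\<And>i. closed (G (Suc i)) \<and> convex (G (Suc i)) \<and> G (Suc i) \<subseteq> G 0
        \<and> xstar \<in> G (Suc i)"
    and step5g: "\<And>i. gbar 0 \<le> gbar (Suc i) \<and> gbar (Suc i) \<le> fstar"
    \<comment> \<open>choice of the tolerances\<close>
    and eps_pos: "\<And>k. eps k > 0"
    and eps_lim: "eps \<longlonglongrightarrow> 0"
  shows "(\<forall>k. \<exists>i. kctr (maxf fs m) y \<gamma> eps i = k \<and>
              \<not> (maxf fs m (y i) - \<gamma> i > eps k))
    \<and> (\<lambda>k. maxf fs m (y (outer_idx (maxf fs m) y \<gamma> eps k))) \<longlonglongrightarrow> fstar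
    \<and> (\<lambda>k. \<gamma> (outer_idx (maxf fs m) y \<gamma> eps k)) \<longlonglongrightarrow> fstar"
proof -
  define f where "f = maxf fs m"
  define kc where "kc = kctr f y \<gamma> eps"
  have kcS: "\<And>i. kc (Suc i) = (if f (y i) - \<gamma> i > eps (kc i) then kc i else Suc (kc i))"
    by (simp add: kc_def)
  have Gi: "G i \<subseteq> G 0" for i using step5G by (cases i) auto
  have xG: "xstar \<in> G i" for i using step5G G0(5) by (cases i) auto
  have gb: "gbar i \<le> fstar" for i using step5g gbar0 by (cases i) auto
  have inM: "\<And>i. (xstar, fstar) \<in> M i"
  proof -
    fix i show "(xstar, fstar) \<in> M i"
    proof (induction i)
      case 0 then show ?case using M0 by simp
    next
      case (Suc i)
      have Q: "(xstar, fstar) \<in> Q i"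
      proof (cases "maxf fs m (y i) - \<gamma> i > eps (kctr (maxf fs m) y \<gamma> eps i)")
        case True
        then have "(xstar, fstar) \<in> S i" "Q i = M i \<inter> S i" using step2a[of i] by blast+
        then show ?thesis using Suc.IH by blast
      next
        case False
        then show ?thesis using step2b[of i] by blast
      qed
      have "\<forall>j\<in>Js i. \<forall>a\<in>A i j. fs j (y i) + inner a (xstar - y i) \<le> fstar"
      proof (intro ballI)
        fix j a assume j: "j \<in> Js i" and a: "a \<in> A i j"
        have "fs j (y i) + inner a (xstar - y i) \<le> fs j xstar"
          using step4A[OF j] a by (auto simp: subdiff_def)
        also have "\<dots> \<le> fstar"
        proof -
          have "j \<in> {1..m}" using step3[of i] j by blast
          then show ?thesis unfolding fstar by (rule maxf_ge)
        qed
        finally show "fs j (y i) + inner a (xstar - y i) \<le> fstar" .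
      qed
      then show ?case using Q unfolding step4M[of i] by blast
    qed
  qed
  have gle: "\<gamma> i \<le> fstar" for i by (rule step1min[OF inM xG gb])
  have yD: "y i \<in> D" for i using step1[of i] Gi[of i] G0(4) by blast
  have fge: "fstar \<le> f (y i)" for i unfolding fstar f_def by (rule xstar(2)[OF yD])
  obtain B where B: "B \<ge> 0" "\<And>j x a. j \<in> {1..m} \<Longrightarrow> x \<in> G 0 \<Longrightarrow> a \<in> subdiff (fs j) x \<Longrightarrow> norm a \<le> B"
  proof -
    from subgrad_bound[OF G0(3), of m fs] fconv obtain B where
      "B \<ge> 0" "\<forall>j\<in>{1..m}. \<forall>x\<in>G 0. \<forall>a\<in>subdiff (fs j) x. norm a \<le> B" by auto
    then show ?thesis using that by blast
  qed
  have fcont: "continuous_on UNIV f"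
    unfolding f_def maxf_def
    by (rule max_cont) (use m fconv convex_on_continuous open_UNIV in auto)
  have phase: "\<exists>i\<ge>i0. kc i = k \<and> \<not> (f (y i) - \<gamma> i > eps k)" if k0: "kc i0 = k" for i0 k
  proof (rule ccontr)
    assume "\<not> ?thesis"
    then have H: "\<And>i. i \<ge> i0 \<Longrightarrow> kc i = k \<Longrightarrow> f (y i) - \<gamma> i > eps k" by auto
    have all: "kc (i0 + n) = k" for n
    proof (induction n)
      case 0 then show ?case using k0 by simp
    next
      case (Suc n) then show ?case using H[of "i0+n"] kcS[of "i0+n"] by simp
    qed
    have gp: "\<And>i. i \<ge> i0 \<Longrightarrow> kc i = k \<and> f (y i) - \<gamma> i > eps k"
    proof -
      fix i assume i: "i \<ge> i0"
      then obtain n where "i = i0 + n" using le_Suc_ex by blast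
      then have "kc i = k" using all by simp
      then show "kc i = k \<and> f (y i) - \<gamma> i > eps k" using H[OF i] by blast
    qed
    have mono: "\<And>i. i \<ge> i0 \<Longrightarrow> M (Suc i) \<subseteq> M i"
    proof -
      fix i assume i: "i \<ge> i0"
      have "maxf fs m (y i) - \<gamma> i > eps (kctr (maxf fs m) y \<gamma> eps i)"
        using gp[OF i] unfolding f_def kc_def by simp
      then have "Q i = M i \<inter> S i" using step2a[of i] by blast
      then show "M (Suc i) \<subseteq> M i" using step4M[of i] by auto
    qed
    have nest: "M (Suc i + d) \<subseteq> M (Suc i)" if "i \<ge> i0" for i d
    proof (induction d)
      case 0 then show ?case by simp
    next
      case (Suc d) then show ?case using mono[of "Suc i + d"] that by auto
    qed
    define z where "z n = y (i0 + n)" for n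
    have bz: "bounded (range z)"
    proof -
      have "range z \<subseteq> G 0" using step1 Gi unfolding z_def by blast
      then show ?thesis using bounded_subset[OF G0(3)] by blast
    qed
    have ek: "eps k > 0" by (rule eps_pos)
    show False
    proof (rule sep_contra[OF bz fcont B(1) ek])
      fix n n' :: nat assume nn: "n < n'"
      define i where "i = i0 + n"
      define l where "l = i0 + n'"
      have il: "l = Suc i + (n' - n - 1)" using nn by (simp add: i_def l_def)
      have "(y l, \<gamma> l) \<in> M (Suc i)" using nest[of i "n' - n - 1"] step1[of l] il by (auto simp: i_def)
      then have cut: "\<forall>j\<in>Js i. \<forall>a\<in>A i j. fs j (y i) + inner a (y l - y i) \<le> \<gamma> l"
        using step4M[of i] by auto
      obtain j where j: "j \<in> Js i" "j \<in> active fs m (y i)" using step3[of i] by blast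
      obtain a where a: "a \<in> A i j" using step4A[OF j(1)] by blast
      have fj: "fs j (y i) = f (y i)" using j(2) by (simp add: active_def f_def)
      have j1: "j \<in> {1..m}" using step3[of i] j(1) by blast
      have yi: "y i \<in> G 0" using step1[of i] Gi[of i] by blast
      have as: "a \<in> subdiff (fs j) (y i)" using step4A[OF j(1)] a by blast
      have na: "norm a \<le> B" by (rule B(2)[OF j1 yi as])
      have "- inner a (y l - y i) \<le> norm a * norm (y l - y i)"
        using Cauchy_Schwarz_ineq2[of a "y l - y i"] by linarith
      also have "\<dots> \<le> B * norm (y l - y i)" using na by (simp add: mult_right_mono)
      finally have in1: "- inner a (y l - y i) \<le> B * dist (y l) (y i)" by (simp add: dist_norm)
      have "f (y i) + inner a (y l - y i) \<le> \<gamma> l" using cut j(1) a fj by auto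
      moreover have "f (y l) - \<gamma> l > eps k" using gp[of l] by (simp add: l_def)
      ultimately show "eps k < f (z n') - f (z n) + B * dist (z n') (z n)"
        using in1 by (simp add: z_def i_def[symmetric] l_def[symmetric])
    qed
  qed
  have ex: "\<exists>i. kc i = k" for k
  proof (induction k)
    case 0 then show ?case by (intro exI[of _ 0]) (simp add: kc_def)
  next
    case (Suc k)
    then obtain i0 where "kc i0 = k" by blast
    then obtain i where "kc i = k" "\<not> (f (y i) - \<gamma> i > eps k)" using phase by blast
    then show ?case using kcS[of i] by auto
  qed
  have P1: "\<forall>k. \<exists>i. kc i = k \<and> \<not> (f (y i) - \<gamma> i > eps k)"
    using ex phase by blast
  define oi where "oi k = outer_idx f y \<gamma> eps k" for k
  have oi: "\<And>k. kc (oi k) = k \<and> \<not> (f (y (oi k)) - \<gamma> (oi k) > eps k)"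
    unfolding oi_def outer_idx_def kc_def[symmetric] using P1 by (metis (mono_tags, lifting) LeastI_ex)
  have eps0: "(\<lambda>k. fstar + eps k) \<longlonglongrightarrow> fstar" "(\<lambda>k. fstar - eps k) \<longlonglongrightarrow> fstar"
    using tendsto_add[OF tendsto_const eps_lim] tendsto_diff[OF tendsto_const eps_lim] by auto
  have L1: "(\<lambda>k. f (y (oi k))) \<longlonglongrightarrow> fstar"
  proof (rule real_tendsto_sandwich[OF _ _ tendsto_const eps0(1)])
    show "\<forall>\<^sub>F k in sequentially. fstar \<le> f (y (oi k))" using fge by simp
    show "\<forall>\<^sub>F k in sequentially. f (y (oi k)) \<le> fstar + eps k"
      using oi gle by (auto intro!: always_eventually) (smt (verit) gle oi)
  qed
  have L2: "(\<lambda>k. \<gamma> (oi k)) \<longlonglongrightarrow> fstar"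
  proof (rule real_tendsto_sandwich[OF _ _ eps0(2) tendsto_const])
    show "\<forall>\<^sub>F k in sequentially. \<gamma> (oi k) \<le> fstar" using gle by simp
    show "\<forall>\<^sub>F k in sequentially. fstar - eps k \<le> \<gamma> (oi k)"
      by (intro always_eventually allI) (smt (verit) fge oi)
  qed
  show ?thesis using P1 L1 L2 unfolding f_def kc_def oi_def by simp
qed

end
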